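(* Let $p\ge1$, $u\in E^p$ and $\alpha,\beta\in\mathbb{R}$. Then $$D(\alpha u,\beta u)\le |\alpha-\beta|\,\max\{\|y\|: y\in[u]_0\}.$$
   Context: A fuzzy subset of $\mathbb{R}^p$ is a function $u:\mathbb{R}^p\to[0,1]$. Its $\alpha$-cut is $[u]_\alpha=\{x\in\mathbb{R}^p: u(x)\ge\alpha\}$ for $\alpha\in(0,1]$, and $[u]_0=\overline{\{x\in\mathbb{R}^p: u(x)>0\}}$. The set $E^p$ of $p$-dimensional fuzzy numbers consists of all fuzzy subsets $u$ of $\mathbb{R}^p$ such that $[u]_\alpha$ is a nonempty compact convex subset of $\mathbb{R}^p$ for every $\alpha\in[0,1]$. For $u\in E^p$ and $r\in\mathbb{R}$, $r u$ is the element of $E^p$ determined by $[r u]_\gamma=\{rx: x\in[u]_\gamma\}$ for all $\gamma\in[0,1]$. The sendograph of $u\in E^p$ is $\mathrm{send}\,u=\{(x,\gamma)\in[u]_0\times[0,1]: u(x)\ge\gamma\}\subset\mathbb{R}^{p+1}$. For nonempty compact $U,V\subset\mathbb{R}^{p+1}$ (with the Euclidean metric $d$), the Hausdorff metric is $H(U,V)=\max\{H^*(U,V),H^*(V,U)\}$ with $H^*(U,V)=\sup_{a\in U}\inf_{b\in V}d(a,b)$. The sendograph metric on $E^p$ is $D(u,v)=H(\mathrm{send}\,u,\mathrm{send}\,v)$. $\|\cdot\|$ is the Euclidean norm on $\mathbb{R}^p$. *)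

theory Defs
  imports "HOL-Analysis.Analysis"
begin

text \<open>Fuzzy subsets of a Euclidean space 'a (modelling R^p) are functions 'a => real
  with values in [0,1].\<close>

definition fuzzy_cut :: "('a::euclidean_space \<Rightarrow> real) \<Rightarrow> real \<Rightarrow> 'a set" where
  "fuzzy_cut u \<alpha> = (if \<alpha> = 0 then closure {x. u x > 0} else {x. u x \<ge> \<alpha>})"

definition fuzzy_number :: "('a::euclidean_space \<Rightarrow> real) \<Rightarrow> bool" where
  "fuzzy_number u \<longleftrightarrow> (\<forall>x. 0 \<le> u x \<and> u x \<le> 1) \<and>
     (\<forall>\<alpha>\<in>{0..1}. fuzzy_cut u \<alpha> \<noteq> {} \<and> compact (fuzzy_cut u \<alpha>) \<and> convex (fuzzy_cut u \<alpha>))"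

definition fuzzy_scale :: "real \<Rightarrow> ('a::euclidean_space \<Rightarrow> real) \<Rightarrow> ('a \<Rightarrow> real)" where
  "fuzzy_scale r u = (SOME v. fuzzy_number v \<and>
      (\<forall>\<gamma>\<in>{0..1}. fuzzy_cut v \<gamma> = (\<lambda>x. r *\<^sub>R x) ` fuzzy_cut u \<gamma>))"

definition sendograph :: "('a::euclidean_space \<Rightarrow> real) \<Rightarrow> ('a \<times> real) set" where
  "sendograph u = {(x, \<gamma>). x \<in> fuzzy_cut u 0 \<and> \<gamma> \<in> {0..1} \<and> u x \<ge> \<gamma>}"

definition hausdorff_semi :: "'b::metric_space set \<Rightarrow> 'b set \<Rightarrow> real" where
  "hausdorff_semi U V = (SUP a\<in>U. INF b\<in>V. dist a b)"

definition hausdorff_metric :: "'b::metric_space set \<Rightarrow> 'b set \<Rightarrow> real" where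
  "hausdorff_metric U V = max (hausdorff_semi U V) (hausdorff_semi V U)"

text \<open>Sendograph metric; the product metric on 'a \<times> real is the Euclidean one.\<close>
definition send_dist :: "('a::euclidean_space \<Rightarrow> real) \<Rightarrow> ('a \<Rightarrow> real) \<Rightarrow> real" where
  "send_dist u v = hausdorff_metric (sendograph u) (sendograph v)"

end

theory Submission
  imports Defs
begin

lemma scale_exists:
  fixes u :: "'a::euclidean_space \<Rightarrow> real"
  assumes u: "fuzzy_number u"
  shows "\<exists>v. fuzzy_number v \<and>
      (\<forall>\<gamma>\<in>{0..1}. fuzzy_cut v \<gamma> = (\<lambda>x. r *\<^sub>R x) ` fuzzy_cut u \<gamma>)"
proof (cases "r = 0")
  case True
  define v :: "'a \<Rightarrow> real" where "v = (\<lambda>x. if x = 0 then 1 else 0)"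
  have c: "fuzzy_cut v \<gamma> = {0}" if "\<gamma>\<in>{0..1}" for \<gamma>
    using that by (auto simp: fuzzy_cut_def v_def)
  have ne: "fuzzy_cut u \<gamma> \<noteq> {}" if "\<gamma>\<in>{0..1}" for \<gamma>
    using u that by (auto simp: fuzzy_number_def)
  have "fuzzy_number v" using c by (auto simp: fuzzy_number_def v_def)
  moreover have "\<forall>\<gamma>\<in>{0..1}. fuzzy_cut v \<gamma> = (\<lambda>x. r *\<^sub>R x) ` fuzzy_cut u \<gamma>"
  proof
    fix \<gamma> :: real assume g: "\<gamma> \<in> {0..1}"
    obtain z where "z \<in> fuzzy_cut u \<gamma>" using ne[OF g] by blast
    then have "(\<lambda>x. r *\<^sub>R x) ` fuzzy_cut u \<gamma> = {0}" using True by auto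
    then show "fuzzy_cut v \<gamma> = (\<lambda>x. r *\<^sub>R x) ` fuzzy_cut u \<gamma>" using c[OF g] by simp
  qed
  ultimately show ?thesis by blast
next
  case False
  define v where "v = (\<lambda>x. u (inverse r *\<^sub>R x))"
  have lin: "linear (\<lambda>x::'a. r *\<^sub>R x)" by (simp add: linear_scaleR)
  have inj: "inj (\<lambda>x::'a. r *\<^sub>R x)" using False by (auto simp: inj_on_def)
  have img: "{x::'a. P (inverse r *\<^sub>R x)} = (\<lambda>x. r *\<^sub>R x) ` {y. P y}" for P
  proof -
    show ?thesis
    proof (rule set_eqI, rule iffI)
      fix x :: 'a assume "x \<in> {x. P (inverse r *\<^sub>R x)}"
      moreover have "x = r *\<^sub>R (inverse r *\<^sub>R x)" using False by simp
      ultimately show "x \<in> (\<lambda>x. r *\<^sub>R x) ` {y. P y}" by blast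
    next
      fix x :: 'a assume "x \<in> (\<lambda>x. r *\<^sub>R x) ` {y. P y}"
      then obtain y where "P y" "x = r *\<^sub>R y" by blast
      then show "x \<in> {x. P (inverse r *\<^sub>R x)}" using False by simp
    qed
  qed
  have c: "fuzzy_cut v \<gamma> = (\<lambda>x. r *\<^sub>R x) ` fuzzy_cut u \<gamma>" for \<gamma>
  proof (cases "\<gamma> = 0")
    case True
    have "fuzzy_cut v \<gamma> = closure ((\<lambda>x. r *\<^sub>R x) ` {y. u y > 0})"
      using True img[of "\<lambda>y. u y > 0"] by (simp add: fuzzy_cut_def v_def)
    also have "\<dots> = (\<lambda>x. r *\<^sub>R x) ` closure {y. u y > 0}"
      using closure_injective_linear_image[OF lin inj] by simp
    finally show ?thesis using True by (simp add: fuzzy_cut_def)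
  next
    case F: False
    show ?thesis using F img[of "\<lambda>y. u y \<ge> \<gamma>"] by (simp add: fuzzy_cut_def v_def)
  qed
  have u1: "\<forall>x. 0 \<le> u x \<and> u x \<le> 1"
    and u2: "\<And>\<alpha>. \<alpha>\<in>{0..1} \<Longrightarrow> fuzzy_cut u \<alpha> \<noteq> {} \<and> compact (fuzzy_cut u \<alpha>) \<and> convex (fuzzy_cut u \<alpha>)"
    using u unfolding fuzzy_number_def by blast+
  have "fuzzy_number v"
    unfolding fuzzy_number_def
  proof (intro conjI ballI)
    show "\<forall>x. 0 \<le> v x \<and> v x \<le> 1" using u1 by (simp add: v_def)
  next
    fix \<alpha> :: real assume a: "\<alpha> \<in> {0..1}"
    show "fuzzy_cut v \<alpha> \<noteq> {}" using u2[OF a] by (simp add: c)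
    show "compact (fuzzy_cut v \<alpha>)" using u2[OF a] unfolding c by (blast intro: compact_scaling)
    show "convex (fuzzy_cut v \<alpha>)" using u2[OF a] unfolding c by (blast intro: convex_scaling)
  qed
  then show ?thesis using c by blast
qed

lemma scale_cut:
  fixes u :: "'a::euclidean_space \<Rightarrow> real"
  assumes u: "fuzzy_number u" and "\<gamma>\<in>{0..1}"
  shows "fuzzy_cut (fuzzy_scale r u) \<gamma> = (\<lambda>x. r *\<^sub>R x) ` fuzzy_cut u \<gamma>"
    and "fuzzy_number (fuzzy_scale r u)"
proof -
  have "fuzzy_number (fuzzy_scale r u) \<and>
      (\<forall>\<gamma>\<in>{0..1}. fuzzy_cut (fuzzy_scale r u) \<gamma> = (\<lambda>x. r *\<^sub>R x) ` fuzzy_cut u \<gamma>)"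
    unfolding fuzzy_scale_def by (rule someI_ex[OF scale_exists[OF u, of r]])
  then show "fuzzy_cut (fuzzy_scale r u) \<gamma> = (\<lambda>x. r *\<^sub>R x) ` fuzzy_cut u \<gamma>"
    and "fuzzy_number (fuzzy_scale r u)" using assms(2) by auto
qed

lemma scale_fn:
  fixes u :: "'a::euclidean_space \<Rightarrow> real"
  assumes u: "fuzzy_number u"
  shows "fuzzy_number (fuzzy_scale r u)"
  using scale_cut(2)[OF u, of 0] by simp

lemma send_char:
  assumes nv: "fuzzy_number v"
  shows "sendograph v = {(x, \<gamma>). \<gamma> \<in> {0..1} \<and> x \<in> fuzzy_cut v \<gamma>}"
proof (rule set_eqI)
  fix p :: "'a \<times> real"
  obtain x \<gamma> where p: "p = (x, \<gamma>)" by (cases p)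
  show "p \<in> sendograph v \<longleftrightarrow> p \<in> {(x, \<gamma>). \<gamma> \<in> {0..1} \<and> x \<in> fuzzy_cut v \<gamma>}"
  proof (cases "\<gamma> = 0")
    case True
    have "0 \<le> v x" using nv by (simp add: fuzzy_number_def)
    then show ?thesis using True p unfolding sendograph_def fuzzy_cut_def by auto
  next
    case False
    have "x \<in> closure {x. v x > 0}" if "\<gamma> \<le> v x" "0 \<le> \<gamma>"
      using that False closure_subset[of "{x. v x > 0}"] by auto
    then show ?thesis using False p unfolding sendograph_def fuzzy_cut_def by auto
  qed
qed

lemma semi_bound:
  fixes u :: "'a::euclidean_space \<Rightarrow> real"
  assumes u: "fuzzy_number u"
  shows "hausdorff_semi (sendograph (fuzzy_scale \<alpha> u)) (sendograph (fuzzy_scale \<beta> u))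
           \<le> \<bar>\<alpha> - \<beta>\<bar> * (SUP y\<in>fuzzy_cut u 0. norm y)"
proof -
  let ?M = "SUP y\<in>fuzzy_cut u 0. norm y"
  have cpt: "compact (fuzzy_cut u 0)" using u by (auto simp: fuzzy_number_def)
  have bdd: "bdd_above (norm ` fuzzy_cut u 0)"
    using compact_imp_bounded[OF cpt] unfolding bounded_iff by (auto intro: bdd_aboveI2)
  have cut_sub: "fuzzy_cut u \<gamma> \<subseteq> fuzzy_cut u 0" if "\<gamma> \<ge> 0" for \<gamma>
  proof (cases "\<gamma> = 0")
    case False
    then have "fuzzy_cut u \<gamma> \<subseteq> {x. u x > 0}" using that by (auto simp: fuzzy_cut_def)
    then show ?thesis using closure_subset[of "{x. u x > 0}"] by (auto simp: fuzzy_cut_def)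
  qed simp
  have normM: "norm y \<le> ?M" if "y \<in> fuzzy_cut u \<gamma>" "\<gamma> \<ge> 0" for y \<gamma>
    using cut_sub[OF that(2)] that(1) bdd by (auto intro: cSUP_upper)
  have ne: "sendograph (fuzzy_scale \<alpha> u) \<noteq> {}"
  proof -
    have "fuzzy_cut (fuzzy_scale \<alpha> u) 0 \<noteq> {}"
      using scale_fn[OF u, of \<alpha>] by (simp add: fuzzy_number_def)
    then obtain x where "x \<in> fuzzy_cut (fuzzy_scale \<alpha> u) 0" by blast
    then have "(x, 0) \<in> sendograph (fuzzy_scale \<alpha> u)" by (simp add: send_char[OF scale_fn[OF u]])
    then show ?thesis by blast
  qed
  show ?thesis unfolding hausdorff_semi_def
  proof (rule cSUP_least[OF ne])
    fix a assume a: "a \<in> sendograph (fuzzy_scale \<alpha> u)"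
    then obtain x \<gamma> where a_eq: "a = (x, \<gamma>)" and g: "\<gamma> \<in> {0..1}"
      and x: "x \<in> fuzzy_cut (fuzzy_scale \<alpha> u) \<gamma>" by (auto simp: send_char[OF scale_fn[OF u]])
    then obtain y where y: "y \<in> fuzzy_cut u \<gamma>" and xy: "x = \<alpha> *\<^sub>R y"
      using scale_cut(1)[OF u g] by auto
    have b: "(\<beta> *\<^sub>R y, \<gamma>) \<in> sendograph (fuzzy_scale \<beta> u)"
      using scale_cut(1)[OF u g, of \<beta>] y g by (auto simp: send_char[OF scale_fn[OF u]])
    have "dist a (\<beta> *\<^sub>R y, \<gamma>) = norm (\<alpha> *\<^sub>R y - \<beta> *\<^sub>R y)"
      by (simp add: a_eq xy dist_Pair_Pair dist_norm)
    also have "\<dots> = \<bar>\<alpha> - \<beta>\<bar> * norm y"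
      by (simp flip: scaleR_diff_left)
    also have "\<dots> \<le> \<bar>\<alpha> - \<beta>\<bar> * ?M"
      using normM[OF y] g by (simp add: mult_left_mono)
    finally have d: "dist a (\<beta> *\<^sub>R y, \<gamma>) \<le> \<bar>\<alpha> - \<beta>\<bar> * ?M" .
    have "(INF b\<in>sendograph (fuzzy_scale \<beta> u). dist a b) \<le> dist a (\<beta> *\<^sub>R y, \<gamma>)"
      by (rule cINF_lower[OF _ b]) (auto intro: bdd_belowI[of _ 0])
    then show "(INF b\<in>sendograph (fuzzy_scale \<beta> u). dist a b) \<le> \<bar>\<alpha> - \<beta>\<bar> * ?M"
      using d by linarith
  qed
qed

theorem theorem2p3:
  fixes u :: "'a::euclidean_space \<Rightarrow> real" and \<alpha> \<beta> :: real
  assumes "fuzzy_number u"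
  shows "send_dist (fuzzy_scale \<alpha> u) (fuzzy_scale \<beta> u)
           \<le> \<bar>\<alpha> - \<beta>\<bar> * (SUP y\<in>fuzzy_cut u 0. norm y)"
proof -
  have "hausdorff_semi (sendograph (fuzzy_scale \<alpha> u)) (sendograph (fuzzy_scale \<beta> u))
           \<le> \<bar>\<alpha> - \<beta>\<bar> * (SUP y\<in>fuzzy_cut u 0. norm y)" by (rule semi_bound[OF assms])
  moreover have "hausdorff_semi (sendograph (fuzzy_scale \<beta> u)) (sendograph (fuzzy_scale \<alpha> u))
           \<le> \<bar>\<beta> - \<alpha>\<bar> * (SUP y\<in>fuzzy_cut u 0. norm y)" by (rule semi_bound[OF assms])
  moreover have "\<bar>\<beta> - \<alpha>\<bar> = \<bar>\<alpha> - \<beta>\<bar>" by (rule abs_minus_commute)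
  ultimately show ?thesis unfolding send_dist_def hausdorff_metric_def by simp
qed

end
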